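(* Let $B\in\mathbb{R}^{n\times n}$ be a nonsingular $M$-matrix and $C\in\mathbb{R}^{n\times n}$ an $M$-matrix such that $B^{-1}C\ge 0$ (entrywise), and suppose that $B-C-I$ is a nonsingular $M$-matrix. Then $\rho(X)\neq 1$ for every entrywise nonpositive solution $X\in\mathbb{R}^{n\times n}$ of the quadratic matrix equation $X^2+BX+C=0$.
   Context: $\rho(\cdot)$ denotes spectral radius. Inequalities between matrices are entrywise; a matrix $X$ is nonpositive if $-X\ge 0$ entrywise. A $Z$-matrix is a real square matrix with nonpositive off-diagonal entries; a $Z$-matrix $A=sI-N$ with $N\ge 0$ is an $M$-matrix if $s\ge\rho(N)$ and a nonsingular $M$-matrix if $s>\rho(N)$. *)

theory Defs
  imports "Jordan_Normal_Form.Spectral_Radius"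
begin

definition nonneg_mat :: "real mat \<Rightarrow> bool" where
  "nonneg_mat A \<longleftrightarrow> (\<forall>i<dim_row A. \<forall>j<dim_col A. A $$ (i,j) \<ge> 0)"

definition nonpos_mat :: "real mat \<Rightarrow> bool" where
  "nonpos_mat A \<longleftrightarrow> (\<forall>i<dim_row A. \<forall>j<dim_col A. A $$ (i,j) \<le> 0)"

definition rho :: "real mat \<Rightarrow> real" where
  "rho A = spectral_radius (map_mat complex_of_real A)"

definition M_matrix :: "nat \<Rightarrow> real mat \<Rightarrow> bool" where
  "M_matrix n A \<longleftrightarrow> A \<in> carrier_mat n n \<and>
     (\<exists>s N. N \<in> carrier_mat n n \<and> nonneg_mat N \<and> A = s \<cdot>\<^sub>m 1\<^sub>m n - N \<and> s \<ge> rho N)"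

definition nonsing_M_matrix :: "nat \<Rightarrow> real mat \<Rightarrow> bool" where
  "nonsing_M_matrix n A \<longleftrightarrow> A \<in> carrier_mat n n \<and>
     (\<exists>s N. N \<in> carrier_mat n n \<and> nonneg_mat N \<and> A = s \<cdot>\<^sub>m 1\<^sub>m n - N \<and> s > rho N)"

end

theory Submission imports Defs "HOL-Real_Asymp.Real_Asymp" begin

lemma mv_sum: "A \<in> carrier_mat n n \<Longrightarrow> v \<in> carrier_vec n \<Longrightarrow> i < n \<Longrightarrow>
  (A *\<^sub>v v) $ i = (\<Sum>j<n. A $$ (i,j) * v $ j)"
  by (auto simp: scalar_prod_def lessThan_atLeast0 intro!: sum.cong)

lemma mm_sum: "A \<in> carrier_mat n n \<Longrightarrow> B \<in> carrier_mat n n \<Longrightarrow> i < n \<Longrightarrow> k < n \<Longrightarrow>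
  (A * B) $$ (i,k) = (\<Sum>j<n. A $$ (i,j) * B $$ (j,k))"
  by (auto simp: scalar_prod_def lessThan_atLeast0 intro!: sum.cong)

definition mnorm :: "nat \<Rightarrow> real mat \<Rightarrow> real" where
  "mnorm n A = (\<Sum>i<n. \<Sum>j<n. \<bar>A $$ (i,j)\<bar>)"

lemma mnorm_nonneg: "0 \<le> mnorm n A"
  unfolding mnorm_def by (intro sum_nonneg, auto)

lemma row_le_mnorm: "i < n \<Longrightarrow> (\<Sum>j<n. \<bar>A $$ (i,j)\<bar>) \<le> mnorm n A"
  unfolding mnorm_def
  by (rule member_le_sum[where f = "\<lambda>i. \<Sum>j<n. \<bar>A $$ (i,j)\<bar>"], auto intro: sum_nonneg)

lemma mnorm_add: "A \<in> carrier_mat n n \<Longrightarrow> B \<in> carrier_mat n n \<Longrightarrow>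
  mnorm n (A + B) \<le> mnorm n A + mnorm n B"
  unfolding mnorm_def sum.distrib[symmetric]
  by (intro sum_mono, auto intro: abs_triangle_ineq)

lemma mnorm_minus: "A \<in> carrier_mat n n \<Longrightarrow> B \<in> carrier_mat n n \<Longrightarrow>
  mnorm n (A - B) \<le> mnorm n A + mnorm n B"
  unfolding mnorm_def sum.distrib[symmetric]
  by (intro sum_mono, auto intro: abs_triangle_ineq4)

lemma mnorm_smult: "A \<in> carrier_mat n n \<Longrightarrow> mnorm n (c \<cdot>\<^sub>m A) = \<bar>c\<bar> * mnorm n A"
  unfolding mnorm_def sum_distrib_left
  by (auto simp: abs_mult intro!: sum.cong)

lemma mnorm_one: "mnorm n (1\<^sub>m n) = real n"
proof -
  have "mnorm n (1\<^sub>m n) = (\<Sum>i<n. \<Sum>j<n. if i = j then 1 else 0)"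
    unfolding mnorm_def by (intro sum.cong, auto)
  also have "\<dots> = (\<Sum>i<n. 1)" by (intro sum.cong, auto)
  finally show ?thesis by simp
qed

lemma mnorm_mult: assumes A: "A \<in> carrier_mat n n" and B: "B \<in> carrier_mat n n"
  shows "mnorm n (A * B) \<le> mnorm n A * mnorm n B"
proof -
  have "mnorm n (A * B) = (\<Sum>i<n. \<Sum>k<n. \<bar>\<Sum>j<n. A $$ (i,j) * B $$ (j,k)\<bar>)"
    unfolding mnorm_def using A B by (intro sum.cong refl, simp add: mm_sum del: index_mult_mat)
  also have "\<dots> \<le> (\<Sum>i<n. \<Sum>k<n. \<Sum>j<n. \<bar>A $$ (i,j)\<bar> * \<bar>B $$ (j,k)\<bar>)"
    by (intro sum_mono, rule order_trans[OF sum_abs], simp add: abs_mult)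
  also have "\<dots> = (\<Sum>i<n. \<Sum>j<n. \<bar>A $$ (i,j)\<bar> * (\<Sum>k<n. \<bar>B $$ (j,k)\<bar>))"
    apply (rule sum.cong[OF refl])
    apply (subst sum.swap)
    apply (simp add: sum_distrib_left)
    done
  also have "\<dots> \<le> (\<Sum>i<n. \<Sum>j<n. \<bar>A $$ (i,j)\<bar> * mnorm n B)"
    by (intro sum_mono mult_left_mono row_le_mnorm, auto)
  also have "\<dots> = mnorm n A * mnorm n B"
    unfolding mnorm_def sum_distrib_right by simp
  finally show ?thesis .
qed

lemma mv_bound: assumes A: "A \<in> carrier_mat n n" and v: "v \<in> carrier_vec n"
  and vb: "\<forall>j<n. \<bar>v $ j\<bar> \<le> m" and i: "i < n"
  shows "\<bar>(A *\<^sub>v v) $ i\<bar> \<le> mnorm n A * m"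
proof -
  have m: "0 \<le> m" using vb i by (meson abs_ge_zero order_trans)
  have "\<bar>(A *\<^sub>v v) $ i\<bar> = \<bar>\<Sum>j<n. A $$ (i,j) * v $ j\<bar>" by (simp only: mv_sum[OF A v i])
  also have "\<dots> \<le> (\<Sum>j<n. \<bar>A $$ (i,j)\<bar> * m)"
    by (rule order_trans[OF sum_abs], intro sum_mono, simp add: abs_mult mult_left_mono vb)
  also have "\<dots> = (\<Sum>j<n. \<bar>A $$ (i,j)\<bar>) * m" by (simp add: sum_distrib_right)
  also have "\<dots> \<le> mnorm n A * m" by (intro mult_right_mono row_le_mnorm i m)
  finally show ?thesis .
qed

lemma pow_comm: "Z \<in> carrier_mat n n \<Longrightarrow> Z * Z ^\<^sub>m k = Z ^\<^sub>m k * Z"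
proof (induction k)
  case 0 then show ?case by simp
next
  case (Suc k)
  have "Z * Z ^\<^sub>m Suc k = (Z * Z ^\<^sub>m k) * Z" using Suc.prems by (simp add: assoc_mult_mat[symmetric, of _ n n _ n _ n])
  also have "\<dots> = Z ^\<^sub>m Suc k * Z" using Suc by simp
  finally show ?case .
qed

lemma pow_smult: "(A :: real mat) \<in> carrier_mat n n \<Longrightarrow> (c \<cdot>\<^sub>m A) ^\<^sub>m k = (c ^ k) \<cdot>\<^sub>m (A ^\<^sub>m k)"
proof (induction k)
  case 0 then show ?case by (auto intro!: eq_matI)
next
  case (Suc k)
  have Ak: "A ^\<^sub>m k \<in> carrier_mat n n" using Suc.prems by simp
  have "(c \<cdot>\<^sub>m A) ^\<^sub>m Suc k = (c ^ k \<cdot>\<^sub>m A ^\<^sub>m k) * (c \<cdot>\<^sub>m A)" using Suc by simp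
  also have "\<dots> = c ^ k \<cdot>\<^sub>m (A ^\<^sub>m k * (c \<cdot>\<^sub>m A))"
    using mult_smult_assoc_mat[OF Ak smult_carrier_mat[OF Suc.prems], of "c ^ k" c] by simp
  also have "\<dots> = c ^ k \<cdot>\<^sub>m (c \<cdot>\<^sub>m (A ^\<^sub>m k * A))"
    by (subst mult_smult_distrib[OF Ak Suc.prems], rule refl)
  also have "\<dots> = (c ^ Suc k) \<cdot>\<^sub>m (A ^\<^sub>m Suc k)"
    by (auto intro!: eq_matI)
  finally show ?case .
qed

primrec Qs :: "real mat \<Rightarrow> nat \<Rightarrow> nat \<Rightarrow> real mat" where
  "Qs Z n 0 = 0\<^sub>m n n"
| "Qs Z n (Suc k) = 1\<^sub>m n + Z * Qs Z n k"

lemma Qs_carrier: "Z \<in> carrier_mat n n \<Longrightarrow> Qs Z n k \<in> carrier_mat n n"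
  by (induction k, auto)

lemma Qs_nonneg: "Z \<in> carrier_mat n n \<Longrightarrow> \<forall>i<n. \<forall>j<n. 0 \<le> Z $$ (i,j) \<Longrightarrow>
  i < n \<Longrightarrow> j < n \<Longrightarrow> 0 \<le> Qs Z n k $$ (i,j)"
proof (induction k arbitrary: i j)
  case 0 then show ?case by simp
next
  case (Suc k)
  have Q: "Qs Z n k \<in> carrier_mat n n" using Suc.prems Qs_carrier by auto
  have "0 \<le> (Z * Qs Z n k) $$ (i,j)" using Suc Q
    by (simp add: mm_sum del: index_mult_mat, intro sum_nonneg mult_nonneg_nonneg, auto)
  then show ?case using Suc.prems Q by simp
qed

lemma Qs_eq: assumes Z: "Z \<in> carrier_mat n n"
  shows "Qs Z n k * (1\<^sub>m n - Z) = 1\<^sub>m n - Z ^\<^sub>m k"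
proof (induction k)
  case 0 then show ?case using Z by (auto intro!: eq_matI)
next
  case (Suc k)
  have Q: "Qs Z n k \<in> carrier_mat n n" using Z Qs_carrier by auto
  have IZ: "1\<^sub>m n - Z \<in> carrier_mat n n" using Z by (simp add: minus_carrier_mat)
  have "Qs Z n (Suc k) * (1\<^sub>m n - Z) = 1\<^sub>m n * (1\<^sub>m n - Z) + (Z * Qs Z n k) * (1\<^sub>m n - Z)"
    by (simp only: Qs.simps, rule add_mult_distrib_mat[OF one_carrier_mat mult_carrier_mat[OF Z Q] IZ])
  also have "\<dots> = (1\<^sub>m n - Z) + Z * (Qs Z n k * (1\<^sub>m n - Z))"
    using Z Q IZ by simp
  also have "\<dots> = (1\<^sub>m n - Z) + (Z - Z * Z ^\<^sub>m k)"
    using Z by (simp add: Suc mult_minus_distrib_mat[OF Z one_carrier_mat pow_carrier_mat[OF Z]])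
  also have "\<dots> = 1\<^sub>m n - Z ^\<^sub>m Suc k"
    using Z pow_comm[OF Z, of k] by (auto intro!: eq_matI)
  finally show ?case .
qed


lemma pf_contra:
  fixes X W :: "real mat" and u :: "real vec"
  assumes n: "n > 0" and X: "X \<in> carrier_mat n n" and Xnp: "\<forall>i<n. \<forall>j<n. X $$ (i,j) \<le> 0"
  and W: "W \<in> carrier_mat n n" and WX: "(1\<^sub>m n + X) * W = 1\<^sub>m n"
  and u: "u \<in> carrier_vec n" and i0: "i0 < n" and umax: "\<forall>i<n. \<bar>u $ i\<bar> \<le> u $ i0"
  and upos: "0 < u $ i0" and u0: "\<forall>i<n. 0 \<le> u $ i"
  and Yu: "\<forall>i<n. u $ i \<le> (\<Sum>j<n. - X $$ (i,j) * u $ j)"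
  and decay: "\<And>t \<delta>. t > 1 \<Longrightarrow> \<delta> > 0 \<Longrightarrow> \<exists>K. mnorm n (X ^\<^sub>m K) / t ^ K < \<delta>"
  shows False
proof -
  define \<omega> where "\<omega> = mnorm n W + 1"
  have \<omega>: "\<omega> \<ge> 1" using mnorm_nonneg[of n W] unfolding \<omega>_def by auto
  have W\<omega>: "mnorm n W \<le> \<omega>" unfolding \<omega>_def by simp
  define \<epsilon> where "\<epsilon> = 1 / (8 * real n * \<omega>)"
  have \<epsilon>pos: "\<epsilon> > 0" using n \<omega> unfolding \<epsilon>_def by auto
  have \<epsilon>\<omega>: "\<epsilon> * \<omega> * real n = 1/8" using n \<omega> unfolding \<epsilon>_def by (auto simp: field_simps)
  define t where "t = 1 + \<epsilon>"
  have t: "t > 1" using \<epsilon>pos unfolding t_def by simp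
  define Z where "Z = (- 1 / t) \<cdot>\<^sub>m X"
  have Z: "Z \<in> carrier_mat n n" using X unfolding Z_def by simp
  have Znn: "\<forall>i<n. \<forall>j<n. 0 \<le> Z $$ (i,j)" using X Xnp t unfolding Z_def
    by (auto simp: divide_nonpos_pos)
  obtain K where K: "mnorm n (X ^\<^sub>m K) / t ^ K < 1/4" using decay[OF t, of "1/4"] by auto
  define zK where "zK = mnorm n (Z ^\<^sub>m K)"
  have "zK = \<bar>(- 1 / t) ^ K\<bar> * mnorm n (X ^\<^sub>m K)"
    unfolding zK_def Z_def pow_smult[OF X] mnorm_smult[OF pow_carrier_mat[OF X]] ..
  also have "\<bar>(- 1 / t) ^ K\<bar> = 1 / t ^ K" using t by (simp add: power_abs power_divide)
  finally have zK: "zK < 1/4" "0 \<le> zK" using K mnorm_nonneg[of n "Z ^\<^sub>m K"] unfolding zK_def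
    by auto
  define Q where "Q = Qs Z n K"
  have Q: "Q \<in> carrier_mat n n" unfolding Q_def using Qs_carrier[OF Z] .
  have Qnn: "\<forall>i<n. \<forall>j<n. 0 \<le> Q $$ (i,j)" unfolding Q_def using Qs_nonneg[OF Z Znn] by auto
  have QZ: "Q * (1\<^sub>m n - Z) = 1\<^sub>m n - Z ^\<^sub>m K" unfolding Q_def by (rule Qs_eq[OF Z])
  define mQ where "mQ = mnorm n Q"
  have IZ: "1\<^sub>m n - Z \<in> carrier_mat n n" using Z by (simp add: minus_carrier_mat)
  have IZK: "1\<^sub>m n - Z ^\<^sub>m K \<in> carrier_mat n n" using Z by (simp add: minus_carrier_mat)
  have id1: "1\<^sub>m n + X = t \<cdot>\<^sub>m (1\<^sub>m n - Z) - \<epsilon> \<cdot>\<^sub>m 1\<^sub>m n"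
    by (rule eq_matI) (use X t in \<open>auto simp: Z_def t_def field_simps\<close>)
  have QX: "Q * (1\<^sub>m n + X) = t \<cdot>\<^sub>m (1\<^sub>m n - Z ^\<^sub>m K) - \<epsilon> \<cdot>\<^sub>m Q"
  proof -
    have "Q * (1\<^sub>m n + X) = Q * (t \<cdot>\<^sub>m (1\<^sub>m n - Z)) - Q * (\<epsilon> \<cdot>\<^sub>m 1\<^sub>m n)"
      unfolding id1 by (rule mult_minus_distrib_mat[OF Q smult_carrier_mat[OF IZ] smult_carrier_mat[OF one_carrier_mat]])
    also have "\<dots> = t \<cdot>\<^sub>m (Q * (1\<^sub>m n - Z)) - \<epsilon> \<cdot>\<^sub>m (Q * 1\<^sub>m n)"
      by (simp only: mult_smult_distrib[OF Q IZ] mult_smult_distrib[OF Q one_carrier_mat])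
    also have "\<dots> = t \<cdot>\<^sub>m (1\<^sub>m n - Z ^\<^sub>m K) - \<epsilon> \<cdot>\<^sub>m Q"
      unfolding QZ using Q by simp
    finally show ?thesis .
  qed
  define R where "R = t \<cdot>\<^sub>m (1\<^sub>m n - Z ^\<^sub>m K) - \<epsilon> \<cdot>\<^sub>m Q"
  have R: "R \<in> carrier_mat n n" unfolding R_def using Q by (simp add: minus_carrier_mat)
  have IX: "1\<^sub>m n + X \<in> carrier_mat n n" using X by simp
  have Qeq: "Q = R * W"
  proof -
    have "Q = Q * ((1\<^sub>m n + X) * W)" unfolding WX using Q by simp
    also have "\<dots> = (Q * (1\<^sub>m n + X)) * W" using Q IX W by simp
    finally show ?thesis unfolding QX R_def .
  qed
  have mR: "mnorm n R \<le> t * (real n + zK) + \<epsilon> * mQ"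
  proof -
    have "mnorm n R \<le> mnorm n (t \<cdot>\<^sub>m (1\<^sub>m n - Z ^\<^sub>m K)) + mnorm n (\<epsilon> \<cdot>\<^sub>m Q)"
      unfolding R_def by (rule mnorm_minus, use IZK Q in auto)
    also have "\<dots> = t * mnorm n (1\<^sub>m n - Z ^\<^sub>m K) + \<epsilon> * mQ"
      unfolding mnorm_smult[OF IZK] mnorm_smult[OF Q] mQ_def using t \<epsilon>pos by simp
    also have "mnorm n (1\<^sub>m n - Z ^\<^sub>m K) \<le> real n + zK"
      using mnorm_minus[OF one_carrier_mat pow_carrier_mat[OF Z], of K] unfolding mnorm_one zK_def .
    finally show ?thesis using t by (simp add: mult_left_mono)
  qed
  have mQ1: "mQ \<le> (t * (real n + zK) + \<epsilon> * mQ) * \<omega>"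
  proof -
    have "mQ \<le> mnorm n R * mnorm n W" unfolding mQ_def Qeq by (rule mnorm_mult[OF R W])
    also have "\<dots> \<le> (t * (real n + zK) + \<epsilon> * mQ) * \<omega>"
      by (rule mult_mono[OF mR W\<omega> _ mnorm_nonneg], use t zK \<epsilon>pos mnorm_nonneg[of n Q] in \<open>auto simp: mQ_def\<close>)
    finally show ?thesis .
  qed
  have mQ0: "0 \<le> mQ" unfolding mQ_def by (rule mnorm_nonneg)
  have "\<epsilon> * \<omega> \<le> 1/8"
  proof -
    have "\<epsilon> * \<omega> * 1 \<le> \<epsilon> * \<omega> * real n"
      by (rule mult_left_mono, use n \<epsilon>pos \<omega> in auto)
    then show ?thesis using \<epsilon>\<omega> by simp
  qed
  then have e1: "\<epsilon> * \<omega> * mQ \<le> (1/8) * mQ" using mQ0 by (rule mult_right_mono)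
  have e2: "(t * (real n + zK) + \<epsilon> * mQ) * \<omega> = t * \<omega> * (real n + zK) + \<epsilon> * \<omega> * mQ"
    by (simp add: algebra_simps)
  have mQ2: "7 * mQ \<le> 8 * t * \<omega> * (real n + zK)" using mQ1 e1 e2 by linarith
  have Zu: "(Z *\<^sub>v u) $ i \<ge> u $ i / t" if i: "i < n" for i
  proof -
    have "(Z *\<^sub>v u) $ i = (\<Sum>j<n. Z $$ (i,j) * u $ j)" by (rule mv_sum[OF Z u i])
    also have "\<dots> = (\<Sum>j<n. - X $$ (i,j) * u $ j) / t"
      unfolding sum_divide_distrib using X i by (intro sum.cong refl, auto simp: Z_def)
    finally show ?thesis using Yu i t by (simp add: divide_right_mono)
  qed
  define v where "v = (1\<^sub>m n - Z) *\<^sub>v u"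
  have v: "v \<in> carrier_vec n" unfolding v_def using IZ u by simp
  have v_le: "v $ j \<le> (\<epsilon> / t) * u $ j" if j: "j < n" for j
  proof -
    have "v $ j = u $ j - (Z *\<^sub>v u) $ j" unfolding v_def
      using minus_mult_distrib_mat_vec[OF one_carrier_mat Z u] u j Z by simp
    also have "\<dots> \<le> u $ j - u $ j / t" using Zu[OF j] by simp
    also have "\<dots> = (\<epsilon> / t) * u $ j" using t unfolding t_def by (simp add: field_simps)
    finally show ?thesis .
  qed
  have A: "u $ i - (Z ^\<^sub>m K *\<^sub>v u) $ i \<le> (\<epsilon> / t) * (Q *\<^sub>v u) $ i" if i: "i < n" for i
  proof -
    have "Q *\<^sub>v v = (1\<^sub>m n - Z ^\<^sub>m K) *\<^sub>v u" unfolding v_def QZ[symmetric]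
      using Q IZ u by simp
    then have "u $ i - (Z ^\<^sub>m K *\<^sub>v u) $ i = (Q *\<^sub>v v) $ i"
      using minus_mult_distrib_mat_vec[OF one_carrier_mat pow_carrier_mat[OF Z] u, of K] u i Z by simp
    also have "\<dots> = (\<Sum>j<n. Q $$ (i,j) * v $ j)" by (rule mv_sum[OF Q v i])
    also have "\<dots> \<le> (\<Sum>j<n. Q $$ (i,j) * ((\<epsilon> / t) * u $ j))"
      by (intro sum_mono mult_left_mono v_le, use Qnn i in auto)
    also have "\<dots> = (\<epsilon> / t) * (\<Sum>j<n. Q $$ (i,j) * u $ j)"
      unfolding sum_distrib_left by (intro sum.cong refl, simp)
    also have "\<dots> = (\<epsilon> / t) * (Q *\<^sub>v u) $ i" by (simp only: mv_sum[OF Q u i])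
    finally show ?thesis .
  qed
  define m where "m = u $ i0"
  have ub: "\<forall>j<n. \<bar>u $ j\<bar> \<le> m" using umax unfolding m_def by auto
  have b1: "\<bar>(Z ^\<^sub>m K *\<^sub>v u) $ i0\<bar> \<le> zK * m" unfolding zK_def
    by (rule mv_bound[OF pow_carrier_mat[OF Z] u ub i0])
  have b2: "\<bar>(Q *\<^sub>v u) $ i0\<bar> \<le> mQ * m" unfolding mQ_def
    by (rule mv_bound[OF Q u ub i0])
  have "m \<le> zK * m + (\<epsilon> / t) * (mQ * m)"
  proof -
    have "(\<epsilon> / t) * (Q *\<^sub>v u) $ i0 \<le> (\<epsilon> / t) * (mQ * m)"
      by (rule mult_left_mono, use b2 t \<epsilon>pos in auto)
    then show ?thesis using A[OF i0] b1 unfolding m_def by linarith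
  qed
  then have "m * 1 \<le> m * (zK + (\<epsilon> / t) * mQ)" by (simp add: algebra_simps)
  then have h2: "1 \<le> zK + (\<epsilon> / t) * mQ" using upos unfolding m_def by simp
  have h3: "(\<epsilon> / t) * (7 * mQ) \<le> (\<epsilon> / t) * (8 * t * \<omega> * (real n + zK))"
    by (rule mult_left_mono[OF mQ2], use t \<epsilon>pos in auto)
  have h4: "(\<epsilon> / t) * (8 * t * \<omega> * (real n + zK)) = 8 * (\<epsilon> * \<omega> * real n) + 8 * \<epsilon> * \<omega> * zK"
    using t by (simp add: field_simps)
  have h5: "8 * \<epsilon> * \<omega> * zK \<le> zK"
  proof -
    have "8 * \<epsilon> * \<omega> \<le> 1" using \<open>\<epsilon> * \<omega> \<le> 1/8\<close> by simp
    then have "8 * \<epsilon> * \<omega> * zK \<le> 1 * zK" using zK(2) by (rule mult_right_mono)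
    then show ?thesis by simp
  qed
  have h6: "(\<epsilon> / t) * (7 * mQ) = 7 * ((\<epsilon> / t) * mQ)" by simp
  have "7 * ((\<epsilon> / t) * mQ) = (\<epsilon> / t) * (7 * mQ)" using h6 by simp
  also have "\<dots> \<le> (\<epsilon> / t) * (8 * t * \<omega> * (real n + zK))" by (rule h3)
  also have "\<dots> = 8 * (\<epsilon> * \<omega> * real n) + 8 * \<epsilon> * \<omega> * zK" by (rule h4)
  also have "\<dots> = 1 + 8 * \<epsilon> * \<omega> * zK" unfolding \<epsilon>\<omega> by simp
  finally have h7: "7 * ((\<epsilon> / t) * mQ) \<le> 1 + 8 * \<epsilon> * \<omega> * zK" .
  have key: "\<And>a b z :: real. 1 \<le> z + a \<Longrightarrow> 7 * a \<le> 1 + b \<Longrightarrow> b \<le> z \<Longrightarrow> z < 1/4 \<Longrightarrow> False"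
    by linarith
  show False by (rule key[OF h2 h7 h5 zK(1)])
qed


lemma nsM_inj: assumes M: "nonsing_M_matrix n M" and n: "0 < n"
  and v: "v \<in> carrier_vec n" and Mv: "M *\<^sub>v v = 0\<^sub>v n"
  shows "v = 0\<^sub>v n"
proof (rule ccontr)
  assume vne: "v \<noteq> 0\<^sub>v n"
  from M obtain s N where N: "N \<in> carrier_mat n n" and Ms: "M = s \<cdot>\<^sub>m 1\<^sub>m n - N"
    and s: "s > rho N" unfolding nonsing_M_matrix_def by auto
  have Mc: "M \<in> carrier_mat n n" using M unfolding nonsing_M_matrix_def by auto
  have Nv: "(\<Sum>j<n. N $$ (i,j) * v $ j) = s * v $ i" if i: "i < n" for i
  proof -
    have "0 = (M *\<^sub>v v) $ i" using Mv i by simp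
    also have "\<dots> = (\<Sum>j<n. M $$ (i,j) * v $ j)" by (rule mv_sum[OF Mc v i])
    also have "\<dots> = (\<Sum>j<n. (if i = j then s * v $ j else 0) - N $$ (i,j) * v $ j)"
      by (intro sum.cong refl, use i N in \<open>auto simp: Ms left_diff_distrib\<close>)
    also have "\<dots> = s * v $ i - (\<Sum>j<n. N $$ (i,j) * v $ j)"
      using i by (simp add: sum_subtractf)
    finally show ?thesis by simp
  qed
  define Nc where "Nc = map_mat complex_of_real N"
  define vc where "vc = map_vec complex_of_real v"
  have Ncc: "Nc \<in> carrier_mat n n" unfolding Nc_def using N by simp
  have vcc: "vc \<in> carrier_vec n" unfolding vc_def using v by simp
  have "eigenvector Nc vc (complex_of_real s)"
    unfolding eigenvector_def
  proof (intro conjI)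
    show "vc \<in> carrier_vec (dim_row Nc)" using vcc Ncc by simp
    show "vc \<noteq> 0\<^sub>v (dim_row Nc)"
    proof
      assume "vc = 0\<^sub>v (dim_row Nc)"
      then have "v = 0\<^sub>v n" using v Ncc unfolding vc_def
        by (intro eq_vecI, auto simp: vec_eq_iff)
      with vne show False by simp
    qed
    show "Nc *\<^sub>v vc = complex_of_real s \<cdot>\<^sub>v vc"
    proof (rule eq_vecI)
      fix i assume "i < dim_vec (complex_of_real s \<cdot>\<^sub>v vc)"
      then have i: "i < n" using vcc by simp
      have "(Nc *\<^sub>v vc) $ i = (\<Sum>j<n. Nc $$ (i,j) * vc $ j)" by (rule mv_sum[OF Ncc vcc i])
      also have "\<dots> = complex_of_real (\<Sum>j<n. N $$ (i,j) * v $ j)"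
        unfolding of_real_sum using N v i by (intro sum.cong refl, auto simp: Nc_def vc_def)
      also have "\<dots> = (complex_of_real s \<cdot>\<^sub>v vc) $ i" using Nv[OF i] i v by (simp add: vc_def)
      finally show "(Nc *\<^sub>v vc) $ i = (complex_of_real s \<cdot>\<^sub>v vc) $ i" .
    qed (use Ncc vcc in simp)
  qed
  then have "cmod (complex_of_real s) \<in> cmod ` spectrum Nc"
    unfolding spectrum_def eigenvalue_def by (intro imageI, auto)
  from spectral_radius_mem_max(2)[OF Ncc n this]
  have "\<bar>s\<bar> \<le> rho N" unfolding rho_def Nc_def by simp
  with s show False by simp
qed


theorem lemma3p2:
  fixes n :: nat and B C X :: "real mat"
  assumes n: "n > 0"
    and B: "nonsing_M_matrix n B"
    and C: "M_matrix n C"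
    and BC: "\<forall>Bi \<in> carrier_mat n n. Bi * B = 1\<^sub>m n \<longrightarrow> nonneg_mat (Bi * C)"
    and BCI: "nonsing_M_matrix n (B - C - 1\<^sub>m n)"
    and X: "X \<in> carrier_mat n n"
    and Xnp: "nonpos_mat X"
    and eq: "X * X + B * X + C = 0\<^sub>m n n"
  shows "rho X \<noteq> 1"
proof
  assume r1: "rho X = 1"
  have Bc: "B \<in> carrier_mat n n" using B unfolding nonsing_M_matrix_def by auto
  have Cc: "C \<in> carrier_mat n n" using C unfolding M_matrix_def by auto
  have IX: "1\<^sub>m n + X \<in> carrier_mat n n" using X by simp
  have BX1: "B + X - 1\<^sub>m n \<in> carrier_mat n n" using X Bc by (simp add: minus_carrier_mat)
  have BX: "B + X \<in> carrier_mat n n" using X Bc by simp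
  have Xnp': "\<forall>i<n. \<forall>j<n. X $$ (i,j) \<le> 0" using Xnp X unfolding nonpos_mat_def by auto
  have "(B + X - 1\<^sub>m n) * (1\<^sub>m n + X) = (B + X) * (1\<^sub>m n + X) - 1\<^sub>m n * (1\<^sub>m n + X)"
    by (rule minus_mult_distrib_mat[OF BX one_carrier_mat IX])
  also have "(B + X) * (1\<^sub>m n + X) = B * (1\<^sub>m n + X) + X * (1\<^sub>m n + X)"
    by (rule add_mult_distrib_mat[OF Bc X IX])
  also have "B * (1\<^sub>m n + X) = B * 1\<^sub>m n + B * X"
    by (rule mult_add_distrib_mat[OF Bc one_carrier_mat X])
  also have "X * (1\<^sub>m n + X) = X * 1\<^sub>m n + X * X"
    by (rule mult_add_distrib_mat[OF X one_carrier_mat X])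
  finally have fac0: "(B + X - 1\<^sub>m n) * (1\<^sub>m n + X) =
    B * 1\<^sub>m n + B * X + (X * 1\<^sub>m n + X * X) - 1\<^sub>m n * (1\<^sub>m n + X)" .
  have fac: "B - C - 1\<^sub>m n = (B + X - 1\<^sub>m n) * (1\<^sub>m n + X)"
    unfolding fac0
  proof (rule eq_matI)
    fix i j assume ij: "i < dim_row (B * 1\<^sub>m n + B * X + (X * 1\<^sub>m n + X * X) - 1\<^sub>m n * (1\<^sub>m n + X))"
      "j < dim_col (B * 1\<^sub>m n + B * X + (X * 1\<^sub>m n + X * X) - 1\<^sub>m n * (1\<^sub>m n + X))"
    then have i: "i < n" and j: "j < n" using Bc X by auto
    have "(X * X + B * X + C) $$ (i,j) = 0" using eq i j by simp
    then have "(X * X) $$ (i,j) + (B * X) $$ (i,j) + C $$ (i,j) = 0"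
      using i j X Bc Cc by simp
    then show "(B - C - 1\<^sub>m n) $$ (i,j) =
      (B * 1\<^sub>m n + B * X + (X * 1\<^sub>m n + X * X) - 1\<^sub>m n * (1\<^sub>m n + X)) $$ (i,j)"
      using i j X Bc Cc by simp
  qed (use Bc X Cc in auto)
  have inj: "w = 0\<^sub>v n" if w: "w \<in> carrier_vec n" and Iw: "(1\<^sub>m n + X) *\<^sub>v w = 0\<^sub>v n" for w
  proof (rule nsM_inj[OF BCI n w])
    have "(B - C - 1\<^sub>m n) *\<^sub>v w = (B + X - 1\<^sub>m n) *\<^sub>v ((1\<^sub>m n + X) *\<^sub>v w)"
      unfolding fac using BX1 IX w by simp
    also have "\<dots> = 0\<^sub>v n" unfolding Iw using BX1 by (intro eq_vecI, auto)
    finally show "(B - C - 1\<^sub>m n) *\<^sub>v w = 0\<^sub>v n" .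
  qed
  have "det (1\<^sub>m n + X) \<noteq> 0" using det_0_iff_vec_prod_zero[OF IX] inj by auto
  from det_non_zero_imp_unit[OF IX this, of "()"]
  obtain W where W: "W \<in> carrier_mat n n" and WX: "(1\<^sub>m n + X) * W = 1\<^sub>m n"
    unfolding Units_def ring_mat_def by auto
  define Xc where "Xc = map_mat complex_of_real X"
  have Xcc: "Xc \<in> carrier_mat n n" unfolding Xc_def using X by simp
  have sr: "spectral_radius Xc = 1" using r1 unfolding rho_def Xc_def .
  from spectral_radius_mem_max(1)[OF Xcc n] sr
  obtain lam where ev: "eigenvalue Xc lam" and lam: "cmod lam = 1"
    unfolding spectrum_def by auto
  from ev obtain w where w: "w \<in> carrier_vec n" "w \<noteq> 0\<^sub>v n" "Xc *\<^sub>v w = lam \<cdot>\<^sub>v w"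
    unfolding eigenvalue_def eigenvector_def using Xcc by auto
  define u where "u = vec n (\<lambda>i. cmod (w $ i))"
  have u: "u \<in> carrier_vec n" unfolding u_def by simp
  have u0: "\<forall>i<n. 0 \<le> u $ i" unfolding u_def by simp
  define S where "S = (\<lambda>i. u $ i) ` {..<n}"
  have Sfin: "finite S" and Sne: "S \<noteq> {}" unfolding S_def using n by auto
  from Max_in[OF Sfin Sne] obtain i0 where i0: "i0 < n" and i0max: "u $ i0 = Max S"
    unfolding S_def by auto
  have umax: "\<forall>i<n. \<bar>u $ i\<bar> \<le> u $ i0"
    using u0 Max_ge[OF Sfin] unfolding i0max S_def by auto
  obtain i1 where i1: "i1 < n" "w $ i1 \<noteq> 0"
  proof -
    have "\<exists>i<n. w $ i \<noteq> 0"
    proof (rule ccontr)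
      assume "\<not> ?thesis"
      then have "w = 0\<^sub>v n" using w(1) by (intro eq_vecI, auto)
      with w(2) show False by simp
    qed
    then show ?thesis using that by auto
  qed
  have upos: "0 < u $ i0"
  proof -
    have "0 < u $ i1" using i1 unfolding u_def by simp
    also have "\<dots> \<le> u $ i0" using umax i1 by auto
    finally show ?thesis .
  qed
  have Yu: "\<forall>i<n. u $ i \<le> (\<Sum>j<n. - X $$ (i,j) * u $ j)"
  proof (intro allI impI)
    fix i assume i: "i < n"
    have "u $ i = cmod (lam * w $ i)" using i lam unfolding u_def by (simp add: norm_mult)
    also have "lam * w $ i = (Xc *\<^sub>v w) $ i" using w(3) w(1) i by simp
    also have "\<dots> = (\<Sum>j<n. Xc $$ (i,j) * w $ j)" by (rule mv_sum[OF Xcc w(1) i])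
    also have "cmod \<dots> \<le> (\<Sum>j<n. cmod (Xc $$ (i,j) * w $ j))" by (rule norm_sum)
    also have "\<dots> = (\<Sum>j<n. - X $$ (i,j) * u $ j)"
    proof (intro sum.cong refl)
      fix j assume "j \<in> {..<n}"
      then have j: "j < n" by simp
      have "cmod (Xc $$ (i,j) * w $ j) = \<bar>X $$ (i,j)\<bar> * cmod (w $ j)"
        using i j X unfolding Xc_def by (simp add: norm_mult)
      also have "\<bar>X $$ (i,j)\<bar> = - X $$ (i,j)" using Xnp' i j by simp
      finally show "cmod (Xc $$ (i,j) * w $ j) = - X $$ (i,j) * u $ j"
        using j unfolding u_def by simp
    qed
    finally show "u $ i \<le> (\<Sum>j<n. - X $$ (i,j) * u $ j)" .
  qed
  have "spectral_radius Xc \<le> 1" using sr by simp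
  from spectral_radius_jnf_norm_bound_le_1_upper_triangular[OF Xcc this]
  obtain c1 c2 where nb: "\<And>k. norm_bound (Xc ^\<^sub>m k) (c1 + c2 * real k ^ (n - 1))" by auto
  have entry_b: "\<bar>(X ^\<^sub>m k) $$ (i,j)\<bar> \<le> c1 + c2 * real k ^ (n - 1)" if "i < n" "j < n" for i j k
  proof -
    have "Xc ^\<^sub>m k = map_mat complex_of_real (X ^\<^sub>m k)"
      unfolding Xc_def by (rule of_real_hom.mat_hom_pow[OF X, symmetric])
    with nb[of k] that X show ?thesis unfolding norm_bound_def by auto
  qed
  have mn_b: "mnorm n (X ^\<^sub>m k) \<le> real n * real n * (c1 + c2 * real k ^ (n - 1))" for k
  proof -
    have "mnorm n (X ^\<^sub>m k) \<le> (\<Sum>i<n. \<Sum>j<n. c1 + c2 * real k ^ (n - 1))"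
      unfolding mnorm_def by (intro sum_mono entry_b, auto)
    then show ?thesis by simp
  qed
  have decay: "\<exists>K. mnorm n (X ^\<^sub>m K) / t ^ K < \<delta>" if t: "t > 1" and d: "\<delta> > 0" for t \<delta>
  proof -
    have l1: "(\<lambda>k. (1 / t) ^ k) \<longlonglongrightarrow> 0" by (rule LIMSEQ_power_zero, use t in simp)
    have l2: "(\<lambda>k. real k ^ (n - 1) / t ^ k) \<longlonglongrightarrow> 0" using t by real_asymp
    have l: "(\<lambda>k. real n * real n * c1 * (1 / t) ^ k + real n * real n * c2 * (real k ^ (n - 1) / t ^ k))
      \<longlonglongrightarrow> 0"
      using tendsto_add[OF tendsto_mult[OF tendsto_const l1] tendsto_mult[OF tendsto_const l2]] by simp
    from order_tendstoD(2)[OF l d] obtain K where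
      K: "real n * real n * c1 * (1 / t) ^ K + real n * real n * c2 * (real K ^ (n - 1) / t ^ K) < \<delta>"
      unfolding eventually_sequentially by auto
    have tK: "t ^ K > 0" using t by simp
    have "mnorm n (X ^\<^sub>m K) / t ^ K \<le> real n * real n * (c1 + c2 * real K ^ (n - 1)) / t ^ K"
      by (rule divide_right_mono[OF mn_b], use tK in simp)
    also have "\<dots> = real n * real n * c1 * (1 / t) ^ K + real n * real n * c2 * (real K ^ (n - 1) / t ^ K)"
      using tK by (simp add: field_simps power_divide add_divide_distrib)
    finally show ?thesis using K by (intro exI[of _ K], linarith)
  qed
  show False by (rule pf_contra[OF n X Xnp' W WX u i0 umax upos u0 Yu decay])
qed


end
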